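(* Let $a_1,\dots,a_n$ be pairwise distinct letters and let $\mathcal{G}=(N,T,P,S)$ be a context-free grammar in which every nonterminal is productive, every production has the form $A\to BC$, $A\to a_i$ or $A\to\varepsilon$ ($A,B,C\in N$), and $L(\mathcal{G})\subseteq a_1^*a_2^*\cdots a_n^*$. Let $\mathcal{G}'$ be obtained from $\mathcal{G}$ by adding the production $A\to\varepsilon$ for every $A\in N$. For $i\in[1,n]$ let $L_i=\{A\in N\mid A\Rightarrow^*_{\mathcal{G}'} a_iA\}$ and $R_i=\{A\in N\mid A\Rightarrow^*_{\mathcal{G}'} Aa_i\}$. Let $\mathcal{G}^\omega$ be the grammar over the new terminal letters $a_1^\omega,\dots,a_n^\omega$ obtained from $\mathcal{G}'$ by (i) removing all productions $A\to a_i$, (ii) adding $A\to a_i^\omega A$ for each $A\in L_i$, and (iii) adding $A\to A a_i^\omega$ for each $A\in R_i$. Then $a_1^\omega a_2^\omega\cdots a_n^\omega\in L(\mathcal{G}^\omega)$ if and only if $a_1^*a_2^*\cdots a_n^*\subseteq\downarrow L(\mathcal{G})$.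
   Context: $\downarrow L$ denotes the set of all (not necessarily contiguous) subwords of words in $L$. $A\Rightarrow^*_{\mathcal{G}'}w$ means that the sentential form $w\in(N\cup T)^*$ is derivable from $A$ in $\mathcal{G}'$. A nonterminal is productive if it derives some terminal word. *)

theory Defs
  imports Main "HOL-Library.Sublist"
begin

datatype ('n, 't) sym = Nt 'n | Tm 't

type_synonym ('n, 't) prod = "'n \<times> ('n, 't) sym list"

definition derive1 :: "('n, 't) prod set \<Rightarrow> ('n, 't) sym list \<Rightarrow> ('n, 't) sym list \<Rightarrow> bool" where
  "derive1 P u v \<longleftrightarrow> (\<exists>x y A rhs. (A, rhs) \<in> P \<and> u = x @ [Nt A] @ y \<and> v = x @ rhs @ y)"

definition derives :: "('n, 't) prod set \<Rightarrow> ('n, 't) sym list \<Rightarrow> ('n, 't) sym list \<Rightarrow> bool" where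
  "derives P = (derive1 P)\<^sup>*\<^sup>*"

definition Lang :: "('n, 't) prod set \<Rightarrow> 'n \<Rightarrow> 't list set" where
  "Lang P S = {w. derives P [Nt S] (map Tm w)}"

definition productive :: "('n, 't) prod set \<Rightarrow> 'n \<Rightarrow> bool" where
  "productive P A \<longleftrightarrow> (\<exists>w. derives P [Nt A] (map Tm w))"

definition star_concat :: "'t list \<Rightarrow> 't list set" where
  "star_concat as = {w. \<exists>ks. length ks = length as \<and> w = concat (map2 (\<lambda>a k. replicate k a) as ks)}"

definition down_closure :: "'t list set \<Rightarrow> 't list set" where
  "down_closure L = {u. \<exists>w\<in>L. subseq u w}"

definition eps_closure_grammar :: "'n set \<Rightarrow> ('n, 't) prod set \<Rightarrow> ('n, 't) prod set" where
  "eps_closure_grammar N P = P \<union> {(A, []) | A. A \<in> N}"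

text \<open>L_i and R_i (letter a_i = as ! i, 0-based index i).\<close>
definition Lset :: "'n set \<Rightarrow> ('n, 't) prod set \<Rightarrow> 't list \<Rightarrow> nat \<Rightarrow> 'n set" where
  "Lset N P as i = {A \<in> N. derives (eps_closure_grammar N P) [Nt A] [Tm (as ! i), Nt A]}"

definition Rset :: "'n set \<Rightarrow> ('n, 't) prod set \<Rightarrow> 't list \<Rightarrow> nat \<Rightarrow> 'n set" where
  "Rset N P as i = {A \<in> N. derives (eps_closure_grammar N P) [Nt A] [Nt A, Tm (as ! i)]}"

text \<open>G^omega over the new terminal alphabet: the letter a_i^omega is represented
by the index i (type nat).\<close>
definition omega_grammar :: "'n set \<Rightarrow> ('n, 't) prod set \<Rightarrow> 't list \<Rightarrow> ('n, nat) prod set" where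
  "omega_grammar N P as =
     {(A, map Nt Bs) | A Bs. (A, map Nt Bs) \<in> eps_closure_grammar N P}
     \<union> {(A, [Tm i, Nt A]) | A i. i < length as \<and> A \<in> Lset N P as i}
     \<union> {(A, [Nt A, Tm i]) | A i. i < length as \<and> A \<in> Rset N P as i}"

end

theory Submission
  imports Defs
begin


lemma derive1_ctx: "derive1 P u v \<Longrightarrow> derive1 P (g @ u @ d) (g @ v @ d)"
  unfolding derive1_def by (metis append.assoc)

lemma derives_ctx: "derives P u v \<Longrightarrow> derives P (g @ u @ d) (g @ v @ d)"
  unfolding derives_def
proof (induction rule: rtranclp_induct)
  case base then show ?case by simp
next
  case (step y z) then show ?case
    by (meson derive1_ctx rtranclp.rtrancl_into_rtrancl)
qed

lemma derives_refl[simp]: "derives P u u"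
  unfolding derives_def by simp

lemma derives_trans: "derives P u v \<Longrightarrow> derives P v w \<Longrightarrow> derives P u w"
  unfolding derives_def by simp

lemma derives_append: "derives P u u' \<Longrightarrow> derives P v v' \<Longrightarrow> derives P (u @ v) (u' @ v')"
  by (metis append_Nil append_Nil2 derives_ctx derives_trans)

lemma derives_prod: "(A, rhs) \<in> P \<Longrightarrow> derives P [Nt A] rhs"
  unfolding derives_def derive1_def
  by (intro r_into_rtranclp) (metis append_Nil append_Nil2)

inductive gen :: "('n, 't) prod set \<Rightarrow> 'n \<Rightarrow> 't list \<Rightarrow> bool" for P where
  gen_eps: "(A, []) \<in> P \<Longrightarrow> gen P A []"
| gen_tm: "(A, [Tm a]) \<in> P \<Longrightarrow> gen P A [a]"
| gen_bin: "(A, [Nt B, Nt C]) \<in> P \<Longrightarrow> gen P B u \<Longrightarrow> gen P C v \<Longrightarrow> gen P A (u @ v)"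

fun gens :: "('n, 't) prod set \<Rightarrow> ('n, 't) sym list \<Rightarrow> 't list \<Rightarrow> bool" where
  "gens P [] w = (w = [])"
| "gens P (Nt A # al) w = (\<exists>u v. w = u @ v \<and> gen P A u \<and> gens P al v)"
| "gens P (Tm a # al) w = (\<exists>v. w = a # v \<and> gens P al v)"

lemma gens_append: "gens P (al @ be) w \<longleftrightarrow> (\<exists>u v. w = u @ v \<and> gens P al u \<and> gens P be v)"
proof (induction al arbitrary: w)
  case Nil then show ?case by simp
next
  case (Cons s al) then show ?case
  proof (cases s)
    case (Nt A)
    have "(\<exists>u v. w = u @ v \<and> gen P A u \<and> (\<exists>u' v'. v = u' @ v' \<and> gens P al u' \<and> gens P be v'))
      \<longleftrightarrow> (\<exists>u v. w = u @ v \<and> (\<exists>u' v'. u = u' @ v' \<and> gen P A u' \<and> gens P al v') \<and> gens P be v)"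
      by (metis append.assoc)
    then show ?thesis using Cons Nt by simp
  next
    case (Tm a)
    have "(\<exists>v. w = a # v \<and> (\<exists>u' v'. v = u' @ v' \<and> gens P al u' \<and> gens P be v'))
      \<longleftrightarrow> (\<exists>u v. w = u @ v \<and> (\<exists>v'. u = a # v' \<and> gens P al v') \<and> gens P be v)"
      by (metis append_Cons)
    then show ?thesis using Cons Tm by simp
  qed
qed

lemma gens_map_Tm[simp]: "gens P (map Tm w) w' \<longleftrightarrow> w' = w"
  by (induction w arbitrary: w') auto

definition shape :: "('n, 't) prod set \<Rightarrow> bool" where
  "shape P \<longleftrightarrow> (\<forall>(A, rhs) \<in> P. (\<exists>B C. rhs = [Nt B, Nt C]) \<or> (\<exists>a. rhs = [Tm a]) \<or> rhs = [])"

lemma derive1_gens: "shape P \<Longrightarrow> derive1 P al be \<Longrightarrow> gens P be w \<Longrightarrow> gens P al w"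
proof -
  assume sh: "shape P" and d: "derive1 P al be" and g: "gens P be w"
  then obtain x y A rhs where p: "(A, rhs) \<in> P" and al: "al = x @ [Nt A] @ y" and be: "be = x @ rhs @ y"
    unfolding derive1_def by blast
  have "gens P (x @ (rhs @ y)) w" using g be by simp
  then obtain w1 w23 where w: "w = w1 @ w23" and g1: "gens P x w1" and g23: "gens P (rhs @ y) w23"
    unfolding gens_append by blast
  from g23 obtain w2 w3 where w23: "w23 = w2 @ w3" and g2: "gens P rhs w2" and g3: "gens P y w3"
    unfolding gens_append by blast
  have "gen P A w2"
  proof -
    from sh p have "(\<exists>B C. rhs = [Nt B, Nt C]) \<or> (\<exists>a. rhs = [Tm a]) \<or> rhs = []"
      unfolding shape_def by blast
    then show ?thesis
    proof (elim disjE exE)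
      fix B C assume r: "rhs = [Nt B, Nt C]"
      with g2 obtain u v where "w2 = u @ v" "gen P B u" "gen P C v" by auto
      then show ?thesis using p r gen_bin[of A B C P u v] by simp
    next
      fix a assume r: "rhs = [Tm a]"
      with g2 have "w2 = [a]" by auto
      then show ?thesis using p r gen_tm[of A a P] by simp
    next
      assume r: "rhs = []"
      with g2 have "w2 = []" by auto
      then show ?thesis using p r gen_eps[of A P] by simp
    qed
  qed
  then have "gens P ([Nt A] @ y) (w2 @ w3)" using g3 by auto
  then have "gens P (x @ ([Nt A] @ y)) (w1 @ (w2 @ w3))" using g1 unfolding gens_append by blast
  then show ?thesis using w w23 al by simp
qed

lemma derives_gens: assumes sh: "shape P" shows "derives P al (map Tm w) \<Longrightarrow> gens P al w"
  unfolding derives_def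
proof (induction rule: converse_rtranclp_induct)
  case base then show ?case by simp
next
  case (step y z) then show ?case using derive1_gens sh by blast
qed

lemma derives_gen: "shape P \<Longrightarrow> derives P [Nt A] (map Tm w) \<Longrightarrow> gen P A w"
  using derives_gens[of P "[Nt A]" w] by auto

lemma gen_derives: "gen P A w \<Longrightarrow> derives P [Nt A] (map Tm w)"
proof (induction rule: gen.induct)
  case (gen_eps A) then show ?case using derives_prod by fastforce
next
  case (gen_tm A a) then show ?case using derives_prod by fastforce
next
  case (gen_bin A B C u v)
  have "derives P [Nt B, Nt C] (map Tm u @ map Tm v)"
    using derives_append[OF gen_bin.IH] by simp
  then show ?case using derives_prod[OF gen_bin.hyps(1)] derives_trans by fastforce
qed

lemma gen_mono: "gen P A w \<Longrightarrow> P \<subseteq> Q \<Longrightarrow> gen Q A w"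
  by (induction rule: gen.induct) (auto intro: gen.intros)



fun blk :: "'t list \<Rightarrow> nat \<Rightarrow> nat list \<Rightarrow> 't list" where
  "blk as i [] = []"
| "blk as i (m # ms) = replicate m (as ! i) @ blk as (Suc i) ms"

lemma blk_append: "blk as i (xs @ ys) = blk as i xs @ blk as (i + length xs) ys"
  by (induction xs arbitrary: i) auto

lemma blk_map2: "i + length ms \<le> length as \<Longrightarrow>
   concat (map2 (\<lambda>a k. replicate k a) (drop i as) ms) = blk as i ms"
proof (induction ms arbitrary: i)
  case Nil then show ?case by simp
next
  case (Cons m ms)
  then have "i < length as" by simp
  then have "drop i as = as ! i # drop (Suc i) as" by (simp add: Cons_nth_drop_Suc)
  with Cons show ?case by simp
qed

lemma length_blk: "length (blk as i ms) = sum_list ms"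
  by (induction ms arbitrary: i) auto

definition hom :: "'t list \<Rightarrow> nat list \<Rightarrow> ('n, nat) sym \<Rightarrow> ('n, 't) sym list" where
  "hom as ks s = (case s of Nt A \<Rightarrow> [Nt A] | Tm i \<Rightarrow> replicate (ks ! i) (Tm (as ! i)))"

lemma hom_upt: "concat (map (hom as ks) (map Tm [i..<j])) = map Tm (blk as i (map (\<lambda>j. ks ! j) [i..<j]))"
proof (induction j)
  case 0 then show ?case by simp
next
  case (Suc j)
  show ?case
  proof (cases "i \<le> j")
    case True
    then show ?thesis using Suc by (simp add: blk_append hom_def)
  next
    case False then show ?thesis by simp
  qed
qed

lemma Lset_pow:
  assumes "A \<in> Lset N P as i"
  shows "derives (eps_closure_grammar N P) [Nt A] (replicate k (Tm (as ! i)) @ [Nt A])"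
proof (induction k)
  case 0 then show ?case by simp
next
  case (Suc k)
  have "derives (eps_closure_grammar N P) [Nt A] [Tm (as ! i), Nt A]"
    using assms unfolding Lset_def by blast
  moreover have "derives (eps_closure_grammar N P) ([Tm (as ! i)] @ [Nt A] @ [])
      ([Tm (as ! i)] @ (replicate k (Tm (as ! i)) @ [Nt A]) @ [])"
    using derives_ctx[OF Suc] by blast
  ultimately show ?case using derives_trans by fastforce
qed

lemma Rset_pow:
  assumes "A \<in> Rset N P as i"
  shows "derives (eps_closure_grammar N P) [Nt A] ([Nt A] @ replicate k (Tm (as ! i)))"
proof (induction k)
  case 0 then show ?case by simp
next
  case (Suc k)
  have "derives (eps_closure_grammar N P) [Nt A] [Nt A, Tm (as ! i)]"
    using assms unfolding Rset_def by blast
  moreover have "derives (eps_closure_grammar N P) ([] @ [Nt A] @ [Tm (as ! i)])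
      ([] @ ([Nt A] @ replicate k (Tm (as ! i))) @ [Tm (as ! i)])"
    using derives_ctx[OF Suc] by blast
  ultimately show ?case using derives_trans by (fastforce simp: replicate_append_same[symmetric])
qed

lemma hom_step:
  fixes N :: "'n set" and P :: "('n, 't) prod set"
  assumes "derive1 (omega_grammar N P as) al be"
  shows "derives (eps_closure_grammar N P) (concat (map (hom as ks) al)) (concat (map (hom as ks) be))"
proof -
  from assms obtain x y A rhs where p: "(A, rhs) \<in> omega_grammar N P as"
    and al: "al = x @ [Nt A] @ y" and be: "be = x @ rhs @ y"
    unfolding derive1_def by blast
  have "derives (eps_closure_grammar N P) [Nt A] (concat (map (hom as ks) rhs))"
  proof -
    from p consider (a) Bs where "rhs = map Nt Bs" "(A, map Nt Bs) \<in> eps_closure_grammar N P"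
      | (b) i where "rhs = [Tm i, Nt A]" "A \<in> Lset N P as i"
      | (c) i where "rhs = [Nt A, Tm i]" "A \<in> Rset N P as i"
      unfolding omega_grammar_def by blast
    then show ?thesis
    proof cases
      case a
      have "concat (map (hom as ks) (map Nt Bs)) = (map Nt Bs :: ('n,'t) sym list)"
        by (induction Bs) (auto simp: hom_def)
      then show ?thesis using a derives_prod by fastforce
    next
      case b then show ?thesis using Lset_pow[of A N P as i "ks ! i"] by (simp add: hom_def)
    next
      case c then show ?thesis using Rset_pow[of A N P as i "ks ! i"] by (simp add: hom_def)
    qed
  qed
  then have "derives (eps_closure_grammar N P) (concat (map (hom as ks) x) @ [Nt A] @ concat (map (hom as ks) y))
     (concat (map (hom as ks) x) @ concat (map (hom as ks) rhs) @ concat (map (hom as ks) y))"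
    by (rule derives_ctx)
  then show ?thesis using al be by (simp add: hom_def)
qed

lemma hom_derives:
  "derives (omega_grammar N P as) al be \<Longrightarrow>
   derives (eps_closure_grammar N P) (concat (map (hom as ks) al)) (concat (map (hom as ks) be))"
  unfolding derives_def[of "omega_grammar N P as"]
proof (induction rule: rtranclp_induct)
  case base then show ?case by simp
next
  case (step y z) then show ?case using hom_step derives_trans by blast
qed



lemma eps_in: "A \<in> N \<Longrightarrow> (A, []) \<in> eps_closure_grammar N P"
  unfolding eps_closure_grammar_def by blast

lemma G'_Tm: "(A, [Tm a]) \<in> eps_closure_grammar N P \<Longrightarrow> (A, [Tm a]) \<in> P"
  unfolding eps_closure_grammar_def by blast

lemma G'_bin: "(A, [Nt B, Nt C]) \<in> eps_closure_grammar N P \<Longrightarrow> (A, [Nt B, Nt C]) \<in> P"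
  unfolding eps_closure_grammar_def by blast

lemma P_sub_G': "P \<subseteq> eps_closure_grammar N P"
  unfolding eps_closure_grammar_def by blast

lemma gen_sub:
  assumes NP: "\<forall>(A, rhs) \<in> P. A \<in> N"
  shows "gen (eps_closure_grammar N P) A w \<Longrightarrow> subseq u w \<Longrightarrow> gen (eps_closure_grammar N P) A u"
proof (induction arbitrary: u rule: gen.induct)
  case (gen_eps A)
  then have "u = []" using list_emb_Nil2 by blast
  then show ?case using gen.gen_eps[OF gen_eps.hyps] by simp
next
  case (gen_tm A a)
  have "length u \<le> 1" using list_emb_length[OF gen_tm.prems] by simp
  then have "u = [] \<or> (\<exists>x. u = [x])" by (cases u) auto
  then have uu: "u = [] \<or> u = [a]" using gen_tm.prems
    by (elim disjE exE) (auto split: if_splits)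
  have "(A, [Tm a]) \<in> P" using G'_Tm[OF gen_tm.hyps] .
  then have "A \<in> N" using NP by auto
  then have "gen (eps_closure_grammar N P) A []" using eps_in gen.gen_eps by metis
  moreover have "gen (eps_closure_grammar N P) A [a]" using gen_tm(1) by (rule gen.gen_tm)
  ultimately show ?case using uu by blast
next
  case (gen_bin A B C u1 v1)
  from gen_bin.prems obtain x y where "u = x @ y" "subseq x u1" "subseq y v1"
    by (auto elim: subseq_appendE)
  moreover have "gen (eps_closure_grammar N P) B x" using gen_bin.IH(1) \<open>subseq x u1\<close> by blast
  moreover have "gen (eps_closure_grammar N P) C y" using gen_bin.IH(2) \<open>subseq y v1\<close> by blast
  ultimately show ?case using gen.gen_bin[OF gen_bin.hyps(1)] by simp
qed

lemma gen_lift: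
  assumes prodN: "\<forall>A\<in>N. \<exists>w. gen P A w"
  shows "gen (eps_closure_grammar N P) A w \<Longrightarrow> \<exists>w'. gen P A w' \<and> subseq w w'"
proof (induction rule: gen.induct)
  case (gen_eps A)
  then have "(A, []) \<in> P \<or> A \<in> N" unfolding eps_closure_grammar_def by blast
  then show ?case
  proof
    assume "(A, []) \<in> P" then have "gen P A []" by (rule gen.gen_eps)
    then show ?thesis by blast
  next
    assume "A \<in> N" then obtain w where "gen P A w" using prodN by blast
    then show ?thesis by blast
  qed
next
  case (gen_tm A a)
  have "gen P A [a]" using gen.gen_tm[OF G'_Tm[OF gen_tm.hyps]] .
  then show ?case by auto
next
  case (gen_bin A B C u v)
  obtain u' where h1: "gen P B u'" "subseq u u'" using gen_bin.IH(1) by blast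
  obtain v' where h2: "gen P C v'" "subseq v v'" using gen_bin.IH(2) by blast
  have "gen P A (u' @ v')" using gen.gen_bin[OF G'_bin[OF gen_bin.hyps(1)] h1(1) h2(1)] .
  moreover have "subseq (u @ v) (u' @ v')" using h1(2) h2(2) by (rule list_emb_append_mono)
  ultimately show ?case by blast
qed

lemma forward:
  fixes N :: "'n set" and P :: "('n, 't) prod set" and S :: 'n and as :: "'t list"
  assumes shG: "shape (eps_closure_grammar N P)"
    and prodN: "\<forall>A\<in>N. \<exists>w. gen P A w"
    and om: "derives (omega_grammar N P as) [Nt S] (map Tm [0..<length as])"
  shows "star_concat as \<subseteq> down_closure (Lang P S)"
proof
  fix z assume "z \<in> star_concat as"
  then obtain ks where ks: "length ks = length as" and z: "z = concat (map2 (\<lambda>a k. replicate k a) as ks)"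
    unfolding star_concat_def by blast
  have zb: "z = blk as 0 ks" using blk_map2[of 0 ks as] ks z by simp
  have h1: "derives (eps_closure_grammar N P) (concat (map (hom as ks) [Nt S]))
     (concat (map (hom as ks) (map Tm [0..<length as])))"
    using hom_derives[OF om] .
  have h0: "concat (map (hom as ks) [Nt S]) = [Nt S]" by (simp add: hom_def)
  have mm: "map (\<lambda>j. ks ! j) [0..<length as] = ks" using ks map_nth[of ks] by simp
  have h2: "concat (map (hom as ks) (map Tm [0..<length as])) = map Tm z"
    using hom_upt[of as ks 0 "length as"] zb mm by simp
  have "derives (eps_closure_grammar N P) [Nt S] (map Tm z)"
    using h1 unfolding h0 h2 .
  then have "gen (eps_closure_grammar N P) S z" using derives_gen[OF shG] by blast
  then obtain w' where w': "gen P S w'" "subseq z w'" using gen_lift[OF prodN] by blast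
  have "w' \<in> Lang P S" using gen_derives[OF w'(1)] unfolding Lang_def by simp
  then show "z \<in> down_closure (Lang P S)"
    unfolding down_closure_def using w'(2) by blast
qed



lemma blk_split:
  "0 < k \<Longrightarrow> k < length (blk as i ms) \<Longrightarrow>
   \<exists>ms1 m ms2 p q. ms = ms1 @ m # ms2 \<and> m = p + q \<and> 0 < p \<and>
     take k (blk as i ms) = blk as i ms1 @ replicate p (as ! (i + length ms1)) \<and>
     drop k (blk as i ms) = replicate q (as ! (i + length ms1)) @ blk as (Suc (i + length ms1)) ms2"
proof (induction ms arbitrary: i k)
  case Nil then show ?case by simp
next
  case (Cons m ms)
  show ?case
  proof (cases "k \<le> m")
    case True
    then show ?thesis using Cons.prems
      by (intro exI[of _ "[]"] exI[of _ m] exI[of _ ms] exI[of _ k] exI[of _ "m - k"]) auto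
  next
    case False
    then have "0 < k - m" "k - m < length (blk as (Suc i) ms)" using Cons.prems by auto
    from Cons.IH[OF this] obtain ms1 m' ms2 p q where
      h: "ms = ms1 @ m' # ms2" "m' = p + q" "0 < p"
      "take (k - m) (blk as (Suc i) ms) = blk as (Suc i) ms1 @ replicate p (as ! (Suc i + length ms1))"
      "drop (k - m) (blk as (Suc i) ms) = replicate q (as ! (Suc i + length ms1)) @ blk as (Suc (Suc i + length ms1)) ms2"
      by blast
    show ?thesis using False h
      by (intro exI[of _ "m # ms1"] exI[of _ m'] exI[of _ ms2] exI[of _ p] exI[of _ q]) auto
  qed
qed

definition FF :: "nat \<Rightarrow> nat \<Rightarrow> nat" where "FF K d = (2 * 4 ^ K) ^ d"

lemma FF_mono: "d' \<le> d \<Longrightarrow> FF K d' \<le> FF K d"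
  unfolding FF_def by (rule power_increasing) auto

lemma FF_pos: "1 \<le> FF K d"
  unfolding FF_def by simp

locale gr =
  fixes N :: "'n set" and P :: "('n, 't) prod set" and as :: "'t list"
  assumes finN: "finite N" and NP: "\<forall>(A, rhs) \<in> P. A \<in> N"
    and BN: "\<forall>A B C. (A, [Nt B, Nt C]) \<in> P \<longrightarrow> B \<in> N \<and> C \<in> N"
begin

abbreviation "GG \<equiv> eps_closure_grammar N P"
abbreviation "OM \<equiv> omega_grammar N P as"

lemma GG_OM: "(A, [Nt B, Nt C]) \<in> GG \<Longrightarrow> (A, [Nt B, Nt C]) \<in> OM"
  unfolding omega_grammar_def by (rule UnI1, rule UnI1) (auto intro: exI[of _ "[B, C]"])

lemma OM_eps: "A \<in> N \<Longrightarrow> (A, []) \<in> OM"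
  unfolding omega_grammar_def using eps_in[of A N P] by (auto intro: exI[of _ "[]"])

lemma GG_binN: "(A, [Nt B, Nt C]) \<in> GG \<Longrightarrow> B \<in> N \<and> C \<in> N"
proof -
  assume "(A, [Nt B, Nt C]) \<in> GG"
  then have "(A, [Nt B, Nt C]) \<in> P" by (rule G'_bin)
  then show ?thesis using BN by simp
qed

lemma GG_toC: "(A, [Nt B, Nt C]) \<in> GG \<Longrightarrow> derives GG [Nt A] [Nt C]"
proof -
  assume h: "(A, [Nt B, Nt C]) \<in> GG"
  have "derives GG ([] @ [Nt B] @ [Nt C]) ([] @ [] @ [Nt C])"
    using derives_ctx derives_prod eps_in GG_binN[OF h] by metis
  then show ?thesis using derives_prod[OF h] derives_trans by fastforce
qed

lemma GG_toB: "(A, [Nt B, Nt C]) \<in> GG \<Longrightarrow> derives GG [Nt A] [Nt B]"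
proof -
  assume h: "(A, [Nt B, Nt C]) \<in> GG"
  have "derives GG ([Nt B] @ [Nt C] @ []) ([Nt B] @ [] @ [])"
    using derives_ctx derives_prod eps_in GG_binN[OF h] by metis
  then show ?thesis using derives_prod[OF h] derives_trans by fastforce
qed

lemma OM_toC: "(A, [Nt B, Nt C]) \<in> GG \<Longrightarrow> derives OM [Nt C] W \<Longrightarrow> derives OM [Nt A] W"
proof -
  assume h: "(A, [Nt B, Nt C]) \<in> GG" and c: "derives OM [Nt C] W"
  have "derives OM ([] @ [Nt B] @ [Nt C]) ([] @ [] @ [Nt C])"
    using derives_ctx derives_prod OM_eps GG_binN[OF h] by metis
  then have "derives OM [Nt B, Nt C] [Nt C]" by simp
  then show ?thesis using derives_trans[OF derives_trans[OF derives_prod[OF GG_OM[OF h]]] c] by simp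
qed

lemma OM_toB: "(A, [Nt B, Nt C]) \<in> GG \<Longrightarrow> derives OM [Nt B] W \<Longrightarrow> derives OM [Nt A] W"
proof -
  assume h: "(A, [Nt B, Nt C]) \<in> GG" and c: "derives OM [Nt B] W"
  have "derives OM ([Nt B] @ [Nt C] @ []) ([Nt B] @ [] @ [])"
    using derives_ctx derives_prod OM_eps GG_binN[OF h] by metis
  then have "derives OM [Nt B, Nt C] [Nt B]" by simp
  then show ?thesis using derives_trans[OF derives_trans[OF derives_prod[OF GG_OM[OF h]]] c] by simp
qed

lemma OM_both: "(A, [Nt B, Nt C]) \<in> GG \<Longrightarrow> derives OM [Nt B] W1 \<Longrightarrow> derives OM [Nt C] W2
   \<Longrightarrow> derives OM [Nt A] (W1 @ W2)"
  using derives_prod[OF GG_OM] derives_append[of OM "[Nt B]" W1 "[Nt C]" W2] derives_trans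
  by fastforce

lemma invL_step: "derives GG [Nt D] [Tm a, Nt X] \<Longrightarrow> derives GG [Nt X] [Nt Y] \<Longrightarrow> derives GG [Nt D] [Tm a, Nt Y]"
  using derives_ctx[of GG "[Nt X]" "[Nt Y]" "[Tm a]" "[]"] derives_trans by fastforce

lemma invR_step: "derives GG [Nt D] [Nt X, Tm a] \<Longrightarrow> derives GG [Nt X] [Nt Y] \<Longrightarrow> derives GG [Nt D] [Nt Y, Tm a]"
  using derives_ctx[of GG "[Nt X]" "[Nt Y]" "[]" "[Tm a]"] derives_trans by fastforce

lemma gen_letter: "gen GG B w \<Longrightarrow> a \<in> set w \<Longrightarrow> derives GG [Nt B] [Tm a]"
  using gen_sub[OF NP, of B w "[a]"] gen_derives[of GG B "[a]"] subseq_singleton_left by fastforce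

lemma OM_L: "i < length as \<Longrightarrow> A \<in> N \<Longrightarrow> derives GG [Nt A] [Tm (as ! i), Nt A] \<Longrightarrow> (A, [Tm i, Nt A]) \<in> OM"
  unfolding omega_grammar_def Lset_def by blast

lemma OM_R: "i < length as \<Longrightarrow> A \<in> N \<Longrightarrow> derives GG [Nt A] [Nt A, Tm (as ! i)] \<Longrightarrow> (A, [Nt A, Tm i]) \<in> OM"
  unfolding omega_grammar_def Rset_def by blast

end



context gr
begin

lemma blk_long:
  assumes "length ms = d" "1 \<le> d" "\<forall>m\<in>set ms. (2::nat) \<le> m"
  shows "2 \<le> length (blk as i ms)"
proof -
  obtain m ms' where "ms = m # ms'" using assms(1,2) by (cases ms) auto
  then have "2 \<le> m" "m \<le> sum_list ms" using assms(3) by (auto)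
  then show ?thesis by (simp add: length_blk)
qed

lemma inner:
  fixes d G :: nat
  assumes outer: "\<And>d' cur w x ms y i. d' < d \<Longrightarrow> gen GG cur w \<Longrightarrow> w = x @ blk as i ms @ y \<Longrightarrow>
        length ms = d' \<Longrightarrow> i + d' \<le> length as \<Longrightarrow> cur \<in> N \<Longrightarrow> (\<forall>m\<in>set ms. FF (card N) d' \<le> m) \<Longrightarrow>
        derives OM [Nt cur] (map Tm [i..<i+d'])"
    and d1: "1 \<le> d" and Gge: "\<And>d'. d' < d \<Longrightarrow> 2 * FF (card N) d' \<le> G"
  shows "gen GG cur w \<Longrightarrow> w = x @ blk as i ms @ y \<Longrightarrow> length ms = d \<Longrightarrow> i + d \<le> length as \<Longrightarrow>
    cur \<in> N \<Longrightarrow> VL \<subseteq> N \<Longrightarrow> VR \<subseteq> N \<Longrightarrow>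
    (\<forall>m\<in>set ms. 2 ^ (card (N - VL) + card (N - VR)) * G \<le> m) \<Longrightarrow>
    (\<forall>D\<in>VL. derives GG [Nt D] [Tm (as ! i), Nt cur]) \<Longrightarrow>
    (\<forall>D\<in>VR. derives GG [Nt D] [Nt cur, Tm (as ! (i + d - 1))]) \<Longrightarrow>
    derives OM [Nt cur] (map Tm [i..<i+d])"
proof (induction arbitrary: x ms y i VL VR rule: gen.induct)
  case (gen_eps A)
  have G2: "2 \<le> G" using Gge[of 0] d1 FF_pos[of "card N" 0] by simp
  have "\<forall>m\<in>set ms. 2 \<le> m"
  proof
    fix m assume "m \<in> set ms"
    then have "2 ^ (card (N - VL) + card (N - VR)) * G \<le> m" using gen_eps.prems(7) by blast
    moreover have "G \<le> 2 ^ (card (N - VL) + card (N - VR)) * G" by simp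
    ultimately show "2 \<le> m" using G2 by linarith
  qed
  then have "2 \<le> length (blk as i ms)" using blk_long gen_eps.prems(2) d1 by blast
  then show ?case using arg_cong[OF gen_eps.prems(1), of length] by simp
next
  case (gen_tm A a)
  have G2: "2 \<le> G" using Gge[of 0] d1 FF_pos[of "card N" 0] by simp
  have "\<forall>m\<in>set ms. 2 \<le> m"
  proof
    fix m assume "m \<in> set ms"
    then have "2 ^ (card (N - VL) + card (N - VR)) * G \<le> m" using gen_tm.prems(7) by blast
    moreover have "G \<le> 2 ^ (card (N - VL) + card (N - VR)) * G" by simp
    ultimately show "2 \<le> m" using G2 by linarith
  qed
  then have "2 \<le> length (blk as i ms)" using blk_long gen_tm.prems(2) d1 by blast
  then show ?case using arg_cong[OF gen_tm.prems(1), of length] by simp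
next
  case (gen_bin cur B C u v)
  note hp = gen_bin.hyps(1)
  have G2: "2 \<le> G" using Gge[of 0] d1 FF_pos[of "card N" 0] by simp
  have BN': "B \<in> N" and CN': "C \<in> N" using GG_binN[OF hp] by auto
  have gcur: "gen GG cur (u @ v)" using gen.gen_bin[OF gen_bin.hyps(1,2,3)] .
  note eq = gen_bin.prems(1) and len = gen_bin.prems(2) and idx = gen_bin.prems(3)
    and curN = gen_bin.prems(4) and VLN = gen_bin.prems(5) and VRN = gen_bin.prems(6)
    and bnd = gen_bin.prems(7) and iL = gen_bin.prems(8) and iR = gen_bin.prems(9)
  define c where "c = card (N - VL) + card (N - VR)"
  have bnd': "\<And>m. m \<in> set ms \<Longrightarrow> 2 ^ c * G \<le> m" using bnd unfolding c_def by blast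
  have mG: "\<And>m. m \<in> set ms \<Longrightarrow> G \<le> m"
  proof -
    fix m assume "m \<in> set ms"
    then have "2 ^ c * G \<le> m" by (rule bnd')
    moreover have "G \<le> 2 ^ c * G" by simp
    ultimately show "G \<le> m" by linarith
  qed
  have FFd: "\<And>d'. d' < d \<Longrightarrow> 2 * FF (card N) d' \<le> G" by (rule Gge)
  have ilt: "i < length as" using idx d1 by simp
  have ilt': "i + d - 1 < length as" using idx d1 by simp
  show ?case
  proof (cases "cur \<in> VL")
    case True
    then have "derives GG [Nt cur] [Tm (as ! i), Nt cur]" using iL by blast
    then have pr: "(cur, [Tm i, Nt cur]) \<in> OM" using OM_L ilt curN by blast
    obtain m0 ms' where ms: "ms = m0 # ms'" using len d1 by (cases ms) auto
    have "derives OM [Nt cur] (map Tm [Suc i..<Suc i + (d - 1)])"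
    proof (rule outer[where d'="d - 1" and cur=cur and w="u @ v" and x="x @ replicate m0 (as ! i)" and ms=ms' and y=y and i="Suc i"])
      show "d - 1 < d" using d1 by simp
      show "gen GG cur (u @ v)" by (rule gcur)
      show "u @ v = (x @ replicate m0 (as ! i)) @ blk as (Suc i) ms' @ y" using eq ms by simp
      show "length ms' = d - 1" using len ms by simp
      show "Suc i + (d - 1) \<le> length as" using idx d1 by simp
      show "cur \<in> N" by (rule curN)
      show "\<forall>m\<in>set ms'. FF (card N) (d - 1) \<le> m"
      proof
        fix m assume "m \<in> set ms'"
        then have "G \<le> m" using mG ms by simp
        moreover have "2 * FF (card N) (d - 1) \<le> G" using FFd d1 by simp
        ultimately show "FF (card N) (d - 1) \<le> m" by linarith
      qed
    qed
    then have "derives OM ([Tm i] @ [Nt cur] @ []) ([Tm i] @ map Tm [Suc i..<Suc i + (d - 1)] @ [])"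
      by (rule derives_ctx)
    then have "derives OM [Nt cur] ([Tm i] @ map Tm [Suc i..<Suc i + (d - 1)])"
      using derives_trans[OF derives_prod[OF pr]] by simp
    moreover have "[i..<i + d] = i # [Suc i..<Suc i + (d - 1)]" using d1 upt_conv_Cons[of i "i + d"] by simp
    ultimately show ?thesis by simp
  next
    case notL: False
    show ?thesis
    proof (cases "cur \<in> VR")
      case True
      then have "derives GG [Nt cur] [Nt cur, Tm (as ! (i + d - 1))]" using iR by blast
      then have pr: "(cur, [Nt cur, Tm (i + d - 1)]) \<in> OM" using OM_R ilt' curN by blast
      obtain ms' ml where ms: "ms = ms' @ [ml]" using len d1 by (cases ms rule: rev_exhaust) auto
      have lms': "length ms' = d - 1" using len ms by simp
      have "derives OM [Nt cur] (map Tm [i..<i + (d - 1)])"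
      proof (rule outer[where d'="d - 1" and cur=cur and w="u @ v" and x=x and ms=ms' and y="replicate ml (as ! (i + d - 1)) @ y" and i=i])
        show "d - 1 < d" using d1 by simp
        show "gen GG cur (u @ v)" by (rule gcur)
        have "i + length ms' = i + d - 1" using lms' d1 by simp
        then show "u @ v = x @ blk as i ms' @ replicate ml (as ! (i + d - 1)) @ y"
          using eq ms by (simp add: blk_append)
        show "length ms' = d - 1" by (rule lms')
        show "i + (d - 1) \<le> length as" using idx d1 by simp
        show "cur \<in> N" by (rule curN)
        show "\<forall>m\<in>set ms'. FF (card N) (d - 1) \<le> m"
        proof
          fix m assume "m \<in> set ms'"
          then have "G \<le> m" using mG ms by simp
          moreover have "2 * FF (card N) (d - 1) \<le> G" using FFd d1 by simp
          ultimately show "FF (card N) (d - 1) \<le> m" by linarith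
        qed
      qed
      then have "derives OM ([] @ [Nt cur] @ [Tm (i + d - 1)]) ([] @ map Tm [i..<i + (d - 1)] @ [Tm (i + d - 1)])"
        by (rule derives_ctx)
      then have "derives OM [Nt cur] (map Tm [i..<i + (d - 1)] @ [Tm (i + d - 1)])"
        using derives_trans[OF derives_prod[OF pr]] by simp
      moreover have "[i..<i + d] = [i..<i + (d - 1)] @ [i + d - 1]"
        using d1 upt_Suc_append[of i "i + (d - 1)"] by (simp add: Suc_diff_1)
      ultimately show ?thesis by simp
    next
      case notR: False
      let ?goal = "derives OM [Nt cur] (map Tm [i..<i + d])"
      define z where "z = blk as i ms"
      have contC: "\<And>x2. v = x2 @ z @ y \<Longrightarrow> ?goal"
      proof -
        fix x2 assume vx: "v = x2 @ z @ y"
        have "derives OM [Nt C] (map Tm [i..<i + d])"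
        proof (rule gen_bin.IH(2))
          show "v = x2 @ blk as i ms @ y" using vx z_def by simp
          show "length ms = d" by (rule len)
          show "i + d \<le> length as" by (rule idx)
          show "C \<in> N" by (rule CN')
          show "VL \<subseteq> N" by (rule VLN)
          show "VR \<subseteq> N" by (rule VRN)
          show "\<forall>m\<in>set ms. 2 ^ (card (N - VL) + card (N - VR)) * G \<le> m" by (rule bnd)
          show "\<forall>D\<in>VL. derives GG [Nt D] [Tm (as ! i), Nt C]"
            using iL invL_step GG_toC[OF hp] by blast
          show "\<forall>D\<in>VR. derives GG [Nt D] [Nt C, Tm (as ! (i + d - 1))]"
            using iR invR_step GG_toC[OF hp] by blast
        qed
        then show ?goal by (rule OM_toC[OF hp])
      qed
      have contB: "\<And>y1. u = x @ z @ y1 \<Longrightarrow> ?goal"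
      proof -
        fix y1 assume uy: "u = x @ z @ y1"
        have "derives OM [Nt B] (map Tm [i..<i + d])"
        proof (rule gen_bin.IH(1))
          show "u = x @ blk as i ms @ y1" using uy z_def by simp
          show "length ms = d" by (rule len)
          show "i + d \<le> length as" by (rule idx)
          show "B \<in> N" by (rule BN')
          show "VL \<subseteq> N" by (rule VLN)
          show "VR \<subseteq> N" by (rule VRN)
          show "\<forall>m\<in>set ms. 2 ^ (card (N - VL) + card (N - VR)) * G \<le> m" by (rule bnd)
          show "\<forall>D\<in>VL. derives GG [Nt D] [Tm (as ! i), Nt B]"
            using iL invL_step GG_toB[OF hp] by blast
          show "\<forall>D\<in>VR. derives GG [Nt D] [Nt B, Tm (as ! (i + d - 1))]"
            using iR invR_step GG_toB[OF hp] by blast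
        qed
        then show ?goal by (rule OM_toB[OF hp])
      qed
      have eq': "u @ v = x @ (z @ y)" using eq z_def by simp
      then obtain us where
        "(u = x @ us \<and> us @ v = z @ y) \<or> (u @ us = x \<and> v = us @ z @ y)"
        unfolding append_eq_append_conv2 by blast
      then show ?goal
      proof
        assume "u @ us = x \<and> v = us @ z @ y"
        then show ?goal using contC by blast
      next
        assume h1: "u = x @ us \<and> us @ v = z @ y"
        then obtain us' where
          "(us = z @ us' \<and> us' @ v = y) \<or> (us @ us' = z \<and> v = us' @ y)"
          unfolding append_eq_append_conv2 by blast
        then show ?goal
        proof
          assume "us = z @ us' \<and> us' @ v = y"
          then show ?goal using contB h1 by simp
        next
          assume h2: "us @ us' = z \<and> v = us' @ y"
          show ?goal
          proof (cases "us = []")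
            case True then show ?goal using contC h2 by simp
          next
            case usne: False
            show ?goal
            proof (cases "us' = []")
              case True then show ?goal using contB h1 h2 by simp
            next
              case usne': False
              define k where "k = length us"
              have k0: "0 < k" using usne k_def by simp
              have kl: "k < length (blk as i ms)" using usne' h2 k_def z_def
                by (metis length_append less_add_same_cancel1 length_greater_0_conv)
              have tk: "take k z = us" and dk: "drop k z = us'" using h2 k_def
                by (metis append_eq_conv_conj)+
              obtain ms1 m ms2 p q where ms: "ms = ms1 @ m # ms2" and mpq: "m = p + q" and p0: "0 < p"
                and tk': "take k (blk as i ms) = blk as i ms1 @ replicate p (as ! (i + length ms1))"
                and dk': "drop k (blk as i ms) = replicate q (as ! (i + length ms1)) @ blk as (Suc (i + length ms1)) ms2"
                using blk_split[OF k0 kl] by blast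
              define l where "l = i + length ms1"
              define a where "a = as ! l"
              have uu: "u = x @ blk as i ms1 @ replicate p a" using h1 tk tk' z_def l_def a_def by simp
              have vv: "v = replicate q a @ blk as (Suc l) ms2 @ y" using h2 dk dk' z_def l_def a_def by simp
              have dd: "d = length ms1 + 1 + length ms2" using len ms by simp
              have mset: "m \<in> set ms" using ms by simp
              have mbig: "2 ^ c * G \<le> m" using bnd' mset .
              have mGm: "G \<le> m" using mG mset .
              have ms1G: "\<And>m'. m' \<in> set ms1 \<Longrightarrow> 2 ^ c * G \<le> m'" using bnd' ms by simp
              have ms2G: "\<And>m'. m' \<in> set ms2 \<Longrightarrow> 2 ^ c * G \<le> m'" using bnd' ms by simp
              have ms1G': "\<And>m'. m' \<in> set ms1 \<Longrightarrow> G \<le> m'" using mG ms by simp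
              have ms2G': "\<And>m'. m' \<in> set ms2 \<Longrightarrow> G \<le> m'" using mG ms by simp
              show ?goal
              proof (cases "q \<le> p")
                case qp: True
                show ?goal
                proof (cases "ms2 = []")
                  case ms2e: True
                  have q0: "0 < q"
                  proof (rule ccontr)
                    assume "\<not> 0 < q" then have "q = 0" by simp
                    then have "us' = []" using dk dk' ms2e z_def by simp
                    with usne' show False by simp
                  qed
                  have dl: "d = length ms1 + 1" using dd ms2e by simp
                  have al: "as ! (i + d - 1) = a" using dl a_def l_def by simp
                  have NV: "N - VR = insert cur (N - insert cur VR)" using notR curN by auto
                  have cN: "card (N - VR) = Suc (card (N - insert cur VR))"
                    using NV finN by (metis card_insert_disjoint finite_Diff Diff_iff insertI1)
                  define c' where "c' = card (N - VL) + card (N - insert cur VR)"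
                  have cc: "c = Suc c'" using cN c_def c'_def by simp
                  have "derives OM [Nt B] (map Tm [i..<i + d])"
                  proof (rule gen_bin.IH(1))
                    show "u = x @ blk as i (ms1 @ [p]) @ []" using uu l_def a_def by (simp add: blk_append)
                    show "length (ms1 @ [p]) = d" using dl by simp
                    show "i + d \<le> length as" by (rule idx)
                    show "B \<in> N" by (rule BN')
                    show "VL \<subseteq> N" by (rule VLN)
                    show "insert cur VR \<subseteq> N" using VRN curN by simp
                    show "\<forall>m'\<in>set (ms1 @ [p]). 2 ^ (card (N - VL) + card (N - insert cur VR)) * G \<le> m'"
                    proof
                      fix m' assume m': "m' \<in> set (ms1 @ [p])"
                      have X: "2 * (2 ^ c' * G) = 2 ^ c * G" using cc by simp
                      show "2 ^ (card (N - VL) + card (N - insert cur VR)) * G \<le> m'"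
                      proof (cases "m' \<in> set ms1")
                        case True
                        then have "2 ^ c * G \<le> m'" by (rule ms1G)
                        then show ?thesis unfolding c'_def[symmetric] using X by linarith
                      next
                        case False
                        then have "m' = p" using m' by simp
                        then show ?thesis unfolding c'_def[symmetric] using X mbig mpq qp by linarith
                      qed
                    qed
                    show "\<forall>D\<in>VL. derives GG [Nt D] [Tm (as ! i), Nt B]"
                      using iL invL_step GG_toB[OF hp] by blast
                    have "a \<in> set v" using vv q0 by simp
                    then have "derives GG [Nt C] [Tm a]" using gen_letter gen_bin.hyps(3) by blast
                    then have "derives GG ([Nt B] @ [Nt C] @ []) ([Nt B] @ [Tm a] @ [])" by (rule derives_ctx)
                    then have cB: "derives GG [Nt cur] [Nt B, Tm a]"
                      using derives_trans[OF derives_prod[OF hp]] by simp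
                    show "\<forall>D\<in>insert cur VR. derives GG [Nt D] [Nt B, Tm (as ! (i + d - 1))]"
                      using iR invR_step GG_toB[OF hp] cB al by auto
                  qed
                  then show ?goal by (rule OM_toB[OF hp])
                next
                  case ms2ne: False
                  have l1d: "length ms1 + 1 < d" using dd ms2ne by simp
                  have F1: "2 * FF (card N) (length ms1 + 1) \<le> G" using FFd l1d by blast
                  have hB: "derives OM [Nt B] (map Tm [i..<i + (length ms1 + 1)])"
                  proof (rule outer[where d'="length ms1 + 1" and cur=B and w=u and x=x and ms="ms1 @ [p]" and y="[]" and i=i])
                    show "length ms1 + 1 < d" by (rule l1d)
                    show "gen GG B u" by (rule gen_bin.hyps(2))
                    show "u = x @ blk as i (ms1 @ [p]) @ []" using uu l_def a_def by (simp add: blk_append)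
                    show "length (ms1 @ [p]) = length ms1 + 1" by simp
                    show "i + (length ms1 + 1) \<le> length as" using idx dd by simp
                    show "B \<in> N" by (rule BN')
                    show "\<forall>m'\<in>set (ms1 @ [p]). FF (card N) (length ms1 + 1) \<le> m'"
                    proof
                      fix m' assume m': "m' \<in> set (ms1 @ [p])"
                      show "FF (card N) (length ms1 + 1) \<le> m'"
                      proof (cases "m' \<in> set ms1")
                        case True then show ?thesis using ms1G' F1 by fastforce
                      next
                        case False then have "m' = p" using m' by simp
                        then show ?thesis using F1 mGm mpq qp by linarith
                      qed
                    qed
                  qed
                  have l2d: "length ms2 < d" using dd by simp
                  have F2: "2 * FF (card N) (length ms2) \<le> G" using FFd l2d by blast
                  have hC: "derives OM [Nt C] (map Tm [Suc l..<Suc l + length ms2])"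
                  proof (rule outer[where d'="length ms2" and cur=C and w=v and x="replicate q a" and ms=ms2 and y=y and i="Suc l"])
                    show "length ms2 < d" by (rule l2d)
                    show "gen GG C v" by (rule gen_bin.hyps(3))
                    show "v = replicate q a @ blk as (Suc l) ms2 @ y" by (rule vv)
                    show "length ms2 = length ms2" by simp
                    show "Suc l + length ms2 \<le> length as" using idx dd l_def by simp
                    show "C \<in> N" by (rule CN')
                    show "\<forall>m'\<in>set ms2. FF (card N) (length ms2) \<le> m'"
                      using ms2G' F2 by fastforce
                  qed
                  have "derives OM [Nt cur] (map Tm [i..<i + (length ms1 + 1)] @ map Tm [Suc l..<Suc l + length ms2])"
                    by (rule OM_both[OF hp hB hC])
                  moreover have "[i..<i + d] = [i..<i + (length ms1 + 1)] @ [Suc l..<Suc l + length ms2]"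
                  proof -
                    have e1: "i + d = i + (length ms1 + 1) + length ms2" using dd by simp
                    have e2: "Suc l = i + (length ms1 + 1)" using l_def by simp
                    show ?thesis unfolding e1 e2 by (rule upt_add_eq_append) simp
                  qed
                  ultimately show ?goal by simp
                qed
              next
                case pq: False
                show ?goal
                proof (cases "ms1 = []")
                  case ms1e: True
                  have li: "l = i" using l_def ms1e by simp
                  have dl: "d = Suc (length ms2)" using dd ms1e by simp
                  have NV: "N - VL = insert cur (N - insert cur VL)" using notL curN by auto
                  have cN: "card (N - VL) = Suc (card (N - insert cur VL))"
                    using NV finN by (metis card_insert_disjoint finite_Diff Diff_iff insertI1)
                  define c' where "c' = card (N - insert cur VL) + card (N - VR)"
                  have cc: "c = Suc c'" using cN c_def c'_def by simp
                  have "derives OM [Nt C] (map Tm [i..<i + d])"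
                  proof (rule gen_bin.IH(2))
                    show "v = [] @ blk as i (q # ms2) @ y" using vv li a_def by simp
                    show "length (q # ms2) = d" using dl by simp
                    show "i + d \<le> length as" by (rule idx)
                    show "C \<in> N" by (rule CN')
                    show "insert cur VL \<subseteq> N" using VLN curN by simp
                    show "VR \<subseteq> N" by (rule VRN)
                    show "\<forall>m'\<in>set (q # ms2). 2 ^ (card (N - insert cur VL) + card (N - VR)) * G \<le> m'"
                    proof
                      fix m' assume m': "m' \<in> set (q # ms2)"
                      have X: "2 * (2 ^ c' * G) = 2 ^ c * G" using cc by simp
                      show "2 ^ (card (N - insert cur VL) + card (N - VR)) * G \<le> m'"
                      proof (cases "m' \<in> set ms2")
                        case True
                        then have "2 ^ c * G \<le> m'" by (rule ms2G)
                        then show ?thesis unfolding c'_def[symmetric] using X by linarith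
                      next
                        case False
                        then have "m' = q" using m' by simp
                        then show ?thesis unfolding c'_def[symmetric] using X mbig mpq pq by linarith
                      qed
                    qed
                    have "a \<in> set u" using uu p0 by simp
                    then have "derives GG [Nt B] [Tm a]" using gen_letter gen_bin.hyps(2) by blast
                    then have "derives GG ([] @ [Nt B] @ [Nt C]) ([] @ [Tm a] @ [Nt C])" by (rule derives_ctx)
                    then have cB: "derives GG [Nt cur] [Tm a, Nt C]"
                      using derives_trans[OF derives_prod[OF hp]] by simp
                    show "\<forall>D\<in>insert cur VL. derives GG [Nt D] [Tm (as ! i), Nt C]"
                      using iL invL_step GG_toC[OF hp] cB a_def li by auto
                    show "\<forall>D\<in>VR. derives GG [Nt D] [Nt C, Tm (as ! (i + d - 1))]"
                      using iR invR_step GG_toC[OF hp] by blast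
                  qed
                  then show ?goal by (rule OM_toC[OF hp])
                next
                  case ms1ne: False
                  have l1d: "length ms1 < d" using dd by simp
                  have F1: "2 * FF (card N) (length ms1) \<le> G" using FFd l1d by blast
                  have hB: "derives OM [Nt B] (map Tm [i..<i + length ms1])"
                  proof (rule outer[where d'="length ms1" and cur=B and w=u and x=x and ms=ms1 and y="replicate p a" and i=i])
                    show "length ms1 < d" by (rule l1d)
                    show "gen GG B u" by (rule gen_bin.hyps(2))
                    show "u = x @ blk as i ms1 @ replicate p a" by (rule uu)
                    show "length ms1 = length ms1" by simp
                    show "i + length ms1 \<le> length as" using idx dd by simp
                    show "B \<in> N" by (rule BN')
                    show "\<forall>m'\<in>set ms1. FF (card N) (length ms1) \<le> m'"
                      using ms1G' F1 by fastforce
                  qed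
                  have l2d: "length ms2 + 1 < d" using dd ms1ne by simp
                  have F2: "2 * FF (card N) (length ms2 + 1) \<le> G" using FFd l2d by blast
                  have hC: "derives OM [Nt C] (map Tm [l..<l + (length ms2 + 1)])"
                  proof (rule outer[where d'="length ms2 + 1" and cur=C and w=v and x="[]" and ms="q # ms2" and y=y and i=l])
                    show "length ms2 + 1 < d" by (rule l2d)
                    show "gen GG C v" by (rule gen_bin.hyps(3))
                    show "v = [] @ blk as l (q # ms2) @ y" using vv a_def by simp
                    show "length (q # ms2) = length ms2 + 1" by simp
                    show "l + (length ms2 + 1) \<le> length as" using idx dd l_def by simp
                    show "C \<in> N" by (rule CN')
                    show "\<forall>m'\<in>set (q # ms2). FF (card N) (length ms2 + 1) \<le> m'"
                    proof
                      fix m' assume m': "m' \<in> set (q # ms2)"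
                      show "FF (card N) (length ms2 + 1) \<le> m'"
                      proof (cases "m' \<in> set ms2")
                        case True then show ?thesis using ms2G' F2 by fastforce
                      next
                        case False then have "m' = q" using m' by simp
                        then show ?thesis using F2 mGm mpq pq by linarith
                      qed
                    qed
                  qed
                  have "derives OM [Nt cur] (map Tm [i..<i + length ms1] @ map Tm [l..<l + (length ms2 + 1)])"
                    by (rule OM_both[OF hp hB hC])
                  moreover have "[i..<i + d] = [i..<i + length ms1] @ [l..<l + (length ms2 + 1)]"
                  proof -
                    have e1: "i + d = i + length ms1 + (length ms2 + 1)" using dd by simp
                    have e2: "l = i + length ms1" using l_def by simp
                    show ?thesis unfolding e1 e2 by (rule upt_add_eq_append) simp
                  qed
                  ultimately show ?goal by simp
                qed
              qed
            qed
          qed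
        qed
      qed
    qed
  qed
qed

end



lemma FF_Suc: "FF K (Suc d) = 2 ^ (K + K) * (2 * FF K d)"
proof -
  have "(2::nat) ^ (K + K) = 4 ^ K" by (simp add: power_add power_mult_distrib[symmetric])
  then show ?thesis unfolding FF_def by simp
qed

context gr
begin

lemma outer_all:
  "gen GG cur w \<Longrightarrow> w = x @ blk as i ms @ y \<Longrightarrow> length ms = d \<Longrightarrow> i + d \<le> length as \<Longrightarrow>
   cur \<in> N \<Longrightarrow> (\<forall>m\<in>set ms. FF (card N) d \<le> m) \<Longrightarrow> derives OM [Nt cur] (map Tm [i..<i+d])"
proof (induction d arbitrary: cur w x ms y i rule: less_induct)
  case (less d)
  show ?case
  proof (cases "d = 0")
    case True
    then show ?thesis using derives_prod[OF OM_eps[OF less.prems(5)]] by simp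
  next
    case False
    then obtain d0 where d0: "d = Suc d0" by (cases d) auto
    show ?thesis
    proof (rule inner[where G = "2 * FF (card N) d0" and VL = "{}" and VR = "{}"])
      show "\<And>d' cur w x ms y i. d' < d \<Longrightarrow> gen GG cur w \<Longrightarrow> w = x @ blk as i ms @ y \<Longrightarrow>
        length ms = d' \<Longrightarrow> i + d' \<le> length as \<Longrightarrow> cur \<in> N \<Longrightarrow> (\<forall>m\<in>set ms. FF (card N) d' \<le> m) \<Longrightarrow>
        derives OM [Nt cur] (map Tm [i..<i+d'])" using less.IH by blast
      show "1 \<le> d" using d0 by simp
      show "\<And>d'. d' < d \<Longrightarrow> 2 * FF (card N) d' \<le> 2 * FF (card N) d0"
        using FF_mono d0 by simp
      show "gen GG cur w" by (rule less.prems(1))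
      show "w = x @ blk as i ms @ y" by (rule less.prems(2))
      show "length ms = d" by (rule less.prems(3))
      show "i + d \<le> length as" by (rule less.prems(4))
      show "cur \<in> N" by (rule less.prems(5))
      show "{} \<subseteq> N" "{} \<subseteq> N" by auto
      show "\<forall>m\<in>set ms. 2 ^ (card (N - {}) + card (N - {})) * (2 * FF (card N) d0) \<le> m"
        using less.prems(6) d0 FF_Suc by simp
      show "\<forall>D\<in>{}. derives GG [Nt D] [Tm (as ! i), Nt cur]" by simp
      show "\<forall>D\<in>{}. derives GG [Nt D] [Nt cur, Tm (as ! (i + d - 1))]" by simp
    qed
  qed
qed

end

theorem mainTheorem11:
  fixes N :: "'n set" and P :: "('n, 't) prod set" and S :: 'n and as :: "'t list"
  assumes distinct: "distinct as"
    and finN: "finite N" and finP: "finite P" and S_in: "S \<in> N"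
    and prods: "\<forall>(A, rhs) \<in> P. A \<in> N \<and>
                   ((\<exists>B C. B \<in> N \<and> C \<in> N \<and> rhs = [Nt B, Nt C])
                    \<or> (\<exists>a \<in> set as. rhs = [Tm a])
                    \<or> rhs = [])"
    and prod_all: "\<forall>A \<in> N. productive P A"
    and incl: "Lang P S \<subseteq> star_concat as"
  shows "[0..<length as] \<in> Lang (omega_grammar N P as) S
         \<longleftrightarrow> star_concat as \<subseteq> down_closure (Lang P S)"
proof -
  have NP: "\<forall>(A, rhs) \<in> P. A \<in> N" using prods by blast
  have BN: "\<forall>A B C. (A, [Nt B, Nt C]) \<in> P \<longrightarrow> B \<in> N \<and> C \<in> N"
  proof (intro allI impI)
    fix A B C assume h: "(A, [Nt B, Nt C]) \<in> P"
    have "case (A, [Nt B, Nt C]) of (A, rhs) \<Rightarrow> A \<in> N \<and>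
                   ((\<exists>B C. B \<in> N \<and> C \<in> N \<and> rhs = [Nt B, Nt C])
                    \<or> (\<exists>a \<in> set as. rhs = [Tm a])
                    \<or> rhs = [])" using bspec[OF prods h] .
    then show "B \<in> N \<and> C \<in> N" by auto
  qed
  interpret g: gr N P as using finN NP BN by unfold_locales
  have shP: "shape P" unfolding shape_def using prods by fastforce
  have shG: "shape (eps_closure_grammar N P)"
    unfolding shape_def eps_closure_grammar_def using prods by fastforce
  have prodN: "\<forall>A\<in>N. \<exists>w. gen P A w"
    using prod_all derives_gen[OF shP] unfolding productive_def by blast
  show ?thesis
  proof
    assume "[0..<length as] \<in> Lang (omega_grammar N P as) S"
    then have "derives (omega_grammar N P as) [Nt S] (map Tm [0..<length as])"
      unfolding Lang_def by simp
    then show "star_concat as \<subseteq> down_closure (Lang P S)"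
      using forward[OF shG prodN] by blast
  next
    assume sub: "star_concat as \<subseteq> down_closure (Lang P S)"
    define M where "M = FF (card N) (length as)"
    define z where "z = blk as 0 (replicate (length as) M)"
    have "z \<in> star_concat as"
      unfolding star_concat_def z_def
      using blk_map2[of 0 "replicate (length as) M" as]
      by (intro CollectI exI[of _ "replicate (length as) M"]) simp
    then have "z \<in> down_closure (Lang P S)" using sub by blast
    then obtain w where wL: "w \<in> Lang P S" and zw: "subseq z w" unfolding down_closure_def by blast
    have "gen P S w" using wL derives_gen[OF shP] unfolding Lang_def by blast
    then have "gen (eps_closure_grammar N P) S w" by (rule gen_mono) (rule P_sub_G')
    then have gz: "gen (eps_closure_grammar N P) S z" using gen_sub[OF NP] zw by blast
    have "derives (omega_grammar N P as) [Nt S] (map Tm [0..<0 + length as])"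
    proof (rule g.outer_all[where x = "[]" and y = "[]" and ms = "replicate (length as) M"])
      show "gen (eps_closure_grammar N P) S z" by (rule gz)
      show "z = [] @ blk as 0 (replicate (length as) M) @ []" using z_def by simp
      show "length (replicate (length as) M) = length as" by simp
      show "0 + length as \<le> length as" by simp
      show "S \<in> N" by (rule S_in)
      show "\<forall>m\<in>set (replicate (length as) M). FF (card N) (length as) \<le> m" using M_def by simp
    qed
    then show "[0..<length as] \<in> Lang (omega_grammar N P as) S" unfolding Lang_def by simp
  qed
qed


end
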